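(* In the setting of the generalized combinatorial topology with $\Lambda$ caches and arbitrary vector $(K_0,\dots,K_\Lambda)$ of non-negative integers (with $N\ge K=\sum_\lambda K_\lambda\binom{\Lambda}{\lambda}$), for every $t\in\{0,1,\dots,\Lambda\}$ the $\Lambda$-cache MAN placement with parameter $t$ (which uses cache size $M=tN/\Lambda$ and does not depend on $(K_0,\dots,K_\Lambda)$) admits a delivery scheme whose worst-case load equals $\sum_{\lambda=0}^{\Lambda-t}K_\lambda\binom{\Lambda}{t+\lambda}/\binom{\Lambda}{t}$, which is the optimal worst-case load under uncoded placement $R^\star_{\text{comb}}(tN/\Lambda)$. That is, a single fixed MAN placement is optimal (under uncoded placement) simultaneously for every instance of the generalized combinatorial topology.
   Context: Multi-access coded caching model: a server holds $N$ files $W_1,\dots,W_N$ of $B$ bits; $\Lambda$ caches of $MB$ bits each; $K$ users, $N\ge K$; user $u$ is connected to a subset $\mathcal U_u\subseteq[\Lambda]$ of caches and reads their full contents. Uncoded placement: each file is partitioned into subfiles $W_{n,\mathcal T}$, $\mathcal T\subseteq[\Lambda]$, and cache $\ell$ stores exactly those $W_{n,\mathcal T}$ with $\ell\in\mathcal T$. In delivery each user requests a file, the server broadcasts an error-free message $X$, and each user must decode its file from $X$ and its connected caches; the worst-case load is $\max_{\text{demands}}|X|/B$, and $R^\star$ denotes the infimum over schemes with uncoded placement. Generalized combinatorial topology with vector $(K_0,\dots,K_\Lambda)$: for every $\mathcal U\subseteq[\Lambda]$ there are exactly $K_{|\mathcal U|}$ users whose set of connected caches is exactly $\mathcal U$;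 its optimal load is $R^\star_{\text{comb}}$. MAN placement with parameter $t$: each file $W_n$ is split into $\binom{\Lambda}{t}$ equal-size disjoint subfiles $W_{n,\mathcal T}$, $\mathcal T\subseteq[\Lambda]$, $|\mathcal T|=t$, and cache $\ell$ stores $\{W_{n,\mathcal T}: n\in[N],\ |\mathcal T|=t,\ \ell\in\mathcal T\}$ (exactly $tNB/\Lambda$ bits). Convention: $\binom{n}{k}=0$ if $n<k$ or $k<0$. *)

theory Defs
  imports Complex_Main "HOL-Library.FuncSet"
begin

(* Files are W :: nat => nat => bool ; W n i is bit i of file n (n < N, i < B).
   An uncoded placement assigns to every bit (n,i) the set pl n i of caches storing it
   (this is the subfile index T: bit (n,i) belongs to W_{n,T} with T = pl n i). *)

definition uncoded_placement :: "nat \<Rightarrow> nat \<Rightarrow> nat \<Rightarrow> (nat \<Rightarrow> nat \<Rightarrow> nat set) \<Rightarrow> bool" where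
  "uncoded_placement Lam N B pl \<longleftrightarrow> (\<forall>n<N. \<forall>i<B. pl n i \<subseteq> {..<Lam})"

definition cache_content :: "nat \<Rightarrow> nat \<Rightarrow> (nat \<Rightarrow> nat \<Rightarrow> nat set) \<Rightarrow> nat \<Rightarrow> (nat \<times> nat) set" where
  "cache_content N B pl l = {(n, i). n < N \<and> i < B \<and> l \<in> pl n i}"

definition respects_cache_size :: "nat \<Rightarrow> nat \<Rightarrow> nat \<Rightarrow> real \<Rightarrow> (nat \<Rightarrow> nat \<Rightarrow> nat set) \<Rightarrow> bool" where
  "respects_cache_size Lam N B M pl \<longleftrightarrow>
     (\<forall>l<Lam. real (card (cache_content N B pl l)) \<le> M * real B)"

definition known_bits :: "nat \<Rightarrow> nat \<Rightarrow> (nat \<Rightarrow> nat \<Rightarrow> nat set) \<Rightarrow> nat set \<Rightarrow>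
    (nat \<Rightarrow> nat \<Rightarrow> bool) \<Rightarrow> (nat \<Rightarrow> nat \<Rightarrow> bool)" where
  "known_bits N B pl U W = (\<lambda>n i. if n < N \<and> i < B \<and> pl n i \<inter> U \<noteq> {} then W n i else False)"

definition demands :: "'u set \<Rightarrow> nat \<Rightarrow> ('u \<Rightarrow> nat) set" where
  "demands users N = users \<rightarrow>\<^sub>E {..<N}"

definition delivers :: "'u set \<Rightarrow> ('u \<Rightarrow> nat set) \<Rightarrow> nat \<Rightarrow> nat \<Rightarrow>
    (nat \<Rightarrow> nat \<Rightarrow> nat set) \<Rightarrow> ('u \<Rightarrow> nat) \<Rightarrow> nat \<Rightarrow> bool" where
  "delivers users conn N B pl d L \<longleftrightarrow>
     (\<exists>enc :: (nat \<Rightarrow> nat \<Rightarrow> bool) \<Rightarrow> bool list.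
        (\<forall>W. length (enc W) = L) \<and>
        (\<forall>u\<in>users. \<exists>dec :: bool list \<Rightarrow> (nat \<Rightarrow> nat \<Rightarrow> bool) \<Rightarrow> nat \<Rightarrow> bool.
           \<forall>W. \<forall>i<B. dec (enc W) (known_bits N B pl (conn u) W) i = W (d u) i))"

definition achieves_load :: "'u set \<Rightarrow> ('u \<Rightarrow> nat set) \<Rightarrow> nat \<Rightarrow> nat \<Rightarrow>
    (nat \<Rightarrow> nat \<Rightarrow> nat set) \<Rightarrow> real \<Rightarrow> bool" where
  "achieves_load users conn N B pl R \<longleftrightarrow>
     (\<exists>Lf :: ('u \<Rightarrow> nat) \<Rightarrow> nat.
        (\<forall>d\<in>demands users N. delivers users conn N B pl d (Lf d)) \<and>
        Max ((\<lambda>d. real (Lf d) / real B) ` demands users N) = R)"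

definition opt_load :: "nat \<Rightarrow> 'u set \<Rightarrow> ('u \<Rightarrow> nat set) \<Rightarrow> nat \<Rightarrow> real \<Rightarrow> real" where
  "opt_load Lam users conn N M =
     Inf {R. \<exists>B pl. B > 0 \<and> uncoded_placement Lam N B pl \<and>
                   respects_cache_size Lam N B M pl \<and> achieves_load users conn N B pl R}"

definition comb_users :: "nat \<Rightarrow> (nat \<Rightarrow> nat) \<Rightarrow> (nat set \<times> nat) set" where
  "comb_users Lam Kv = {(U, j). U \<subseteq> {..<Lam} \<and> j < Kv (card U)}"

definition comb_conn :: "nat set \<times> nat \<Rightarrow> nat set" where
  "comb_conn u = fst u"

text \<open>MAN placement with parameter t: every file is split into binom(Lam,t) equal-size
  subfiles W_{n,T}, |T| = t, and bits of W_{n,T} are stored exactly in the caches of T.\<close>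
definition MAN_placement :: "nat \<Rightarrow> nat \<Rightarrow> nat \<Rightarrow> nat \<Rightarrow> (nat \<Rightarrow> nat \<Rightarrow> nat set) \<Rightarrow> bool" where
  "MAN_placement Lam N B t pl \<longleftrightarrow>
     (Lam choose t) dvd B \<and>
     (\<forall>n<N. \<forall>i<B. pl n i \<subseteq> {..<Lam} \<and> card (pl n i) = t) \<and>
     (\<forall>n<N. \<forall>T. T \<subseteq> {..<Lam} \<and> card T = t \<longrightarrow>
         card {i. i < B \<and> pl n i = T} = B div (Lam choose t))"

end

theory Submission
  imports Defs "HOL-Combinatorics.Multiset_Permutations"
begin

definition mpre :: "nat set \<Rightarrow> nat list \<Rightarrow> nat" where
  "mpre T xs = length (takeWhile (\<lambda>x. x \<notin> T) xs)"

lemma mpre_Cons: "mpre T (x # xs) = (if x \<in> T then 0 else Suc (mpre T xs))"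
  by (simp add: mpre_def)

lemma mpre_empty: "mpre {} xs = length xs"
  unfolding mpre_def by (induction xs) simp_all


lemma genie:
  fixes users :: "'u set" and conn :: "'u \<Rightarrow> nat set" and V :: "'u \<Rightarrow> nat set" and d :: "'u \<Rightarrow> nat"
  assumes fin: "finite users"
    and dl: "delivers users conn N B pl d L"
    and dN: "\<forall>u\<in>users. d u < N"
    and dinj: "inj_on d users"
    and Vsup: "\<forall>u\<in>users. conn u \<subseteq> V u"
    and Vfin: "\<forall>u\<in>users. finite (V u)"
    and Vcmp: "\<forall>u\<in>users. \<forall>w\<in>users. V u \<subseteq> V w \<or> V w \<subseteq> V u"
  shows "(\<Sum>u\<in>users. card {i. i<B \<and> pl (d u) i \<inter> V u = {}}) \<le> L"
proof -
  define S where "S = (\<Union>u\<in>users. (\<lambda>i. (d u, i)) ` {i. i<B \<and> pl (d u) i \<inter> V u = {}})"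
  have finS: "finite S" unfolding S_def using fin by auto
  have cardS: "card S = (\<Sum>u\<in>users. card {i. i<B \<and> pl (d u) i \<inter> V u = {}})"
    unfolding S_def
    apply (subst card_UN_disjoint)
    using fin dinj by (auto simp: inj_on_def card_image)
  from dl obtain enc :: "(nat \<Rightarrow> nat \<Rightarrow> bool) \<Rightarrow> bool list" where lenc: "\<forall>W. length (enc W) = L"
    and decs: "\<forall>u\<in>users. \<exists>dec. \<forall>W. \<forall>i<B. dec (enc W) (known_bits N B pl (conn u) W) i = W (d u) i"
    unfolding delivers_def by blast
  define f where "f A = enc (\<lambda>n i. (n,i) \<in> A)" for A
  have injf: "inj_on f (Pow S)"
  proof (rule inj_onI)
    fix A A' assume A: "A \<in> Pow S" and A': "A' \<in> Pow S" and fe: "f A = f A'"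
    define WA where "WA = (\<lambda>n i. (n,i) \<in> A)"
    define WA' where "WA' = (\<lambda>n i. (n,i) \<in> A')"
    have encE: "enc WA = enc WA'" using fe unfolding f_def WA_def WA'_def .
    have key: "\<forall>u\<in>users. card (V u) = k \<longrightarrow> (\<forall>i<B. ((d u, i) \<in> A \<longleftrightarrow> (d u, i) \<in> A'))" for k
    proof (induction k rule: less_induct)
      case (less k)
      show ?case
      proof (intro ballI impI allI)
        fix u i assume u: "u \<in> users" and ck: "card (V u) = k" and iB: "i < B"
        obtain dec where dec: "\<forall>W. \<forall>i<B. dec (enc W) (known_bits N B pl (conn u) W) i = W (d u) i"
          using decs u by blast
        have kn: "known_bits N B pl (conn u) WA = known_bits N B pl (conn u) WA'"
        proof (intro ext)
          fix n j
          show "known_bits N B pl (conn u) WA n j = known_bits N B pl (conn u) WA' n j"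
          proof (cases "n < N \<and> j < B \<and> pl n j \<inter> conn u \<noteq> {}")
            case False thus ?thesis by (auto simp add: known_bits_def)
          next
            case True
            show ?thesis
            proof (cases "(n,j) \<in> S")
              case False
              then have "(n,j) \<notin> A" "(n,j) \<notin> A'" using A A' by auto
              thus ?thesis using True by (simp add: known_bits_def WA_def WA'_def)
            next
              case inS: True
              then obtain w where w: "w \<in> users" "n = d w" "j < B" "pl (d w) j \<inter> V w = {}"
                unfolding S_def by auto
              have "\<not> conn u \<subseteq> V w" using True w by auto
              hence "\<not> V u \<subseteq> V w" using Vsup u by blast
              hence "V w \<subset> V u" using Vcmp u w(1) by blast
              hence "card (V w) < k" using ck Vfin u psubset_card_mono by blast
              hence "(d w, j) \<in> A \<longleftrightarrow> (d w, j) \<in> A'" using less.IH w by blast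
              thus ?thesis using True w by (simp add: known_bits_def WA_def WA'_def)
            qed
          qed
        qed
        have "WA (d u) i = WA' (d u) i"
          using dec iB encE kn by metis
        thus "(d u, i) \<in> A \<longleftrightarrow> (d u, i) \<in> A'" unfolding WA_def WA'_def .
      qed
    qed
    have "\<forall>u\<in>users. \<forall>i<B. ((d u, i) \<in> A \<longleftrightarrow> (d u, i) \<in> A')" using key by blast
    moreover have "\<forall>x\<in>S. \<exists>u\<in>users. \<exists>i<B. x = (d u, i)" unfolding S_def by auto
    ultimately have "\<forall>x\<in>S. x \<in> A \<longleftrightarrow> x \<in> A'" by fastforce
    thus "A = A'" using A A' by auto
  qed
  have "card (Pow S) \<le> card {xs :: bool list. set xs \<subseteq> UNIV \<and> length xs = L}"
  proof (rule card_inj_on_le[OF injf])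
    show "f ` Pow S \<subseteq> {xs. set xs \<subseteq> UNIV \<and> length xs = L}" using lenc unfolding f_def by auto
    show "finite {xs :: bool list. set xs \<subseteq> UNIV \<and> length xs = L}"
      by (rule finite_lists_length_eq) simp
  qed
  also have "\<dots> = 2 ^ L" by (subst card_lists_length_eq) simp_all
  finally have "(2::nat) ^ card S \<le> 2 ^ L" using finS by (simp add: card_Pow)
  hence "card S \<le> L" by simp
  thus ?thesis using cardS by simp
qed


lemma sum_perms_Cons:
  assumes "finite A" "A \<noteq> {}"
  shows "(\<Sum>xs\<in>permutations_of_set A. f xs) = (\<Sum>x\<in>A. \<Sum>xs\<in>permutations_of_set (A - {x}). f (x # xs))"
proof -
  have "(\<Sum>xs\<in>permutations_of_set A. f xs) = (\<Sum>xs\<in>(\<Union>x\<in>A. (\<lambda>xs. x # xs) ` permutations_of_set (A - {x})). f xs)"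
    using permutations_of_set_nonempty[OF assms(2)] by simp
  also have "\<dots> = (\<Sum>x\<in>A. \<Sum>xs\<in>(\<lambda>xs. x # xs) ` permutations_of_set (A - {x}). f xs)"
    by (rule sum.UNION_disjoint) (use assms in auto)
  also have "\<dots> = (\<Sum>x\<in>A. \<Sum>xs\<in>permutations_of_set (A - {x}). f (x # xs))"
    by (rule sum.cong) (auto simp: sum.reindex inj_on_def)
  finally show ?thesis .
qed

lemma phi:
  assumes "finite A" "T \<subseteq> A"
  shows "(\<Sum>xs\<in>permutations_of_set A. mpre T xs choose k) * (card A choose card T)
          = fact (card A) * (card A choose (card T + k))"
  using assms
proof (induction "card A" arbitrary: A k)
  case 0
  hence "A = {}" "T = {}" by auto
  thus ?case by (simp add: mpre_def)
next
  case (Suc n)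
  show ?case
  proof (cases "T = {}")
    case True
    have "(\<Sum>xs\<in>permutations_of_set A. mpre T xs choose k) = (\<Sum>xs\<in>permutations_of_set A. card A choose k)"
      by (rule sum.cong) (auto simp: True mpre_empty length_finite_permutations_of_set)
    thus ?thesis using True Suc.prems by simp
  next
    case Tne: False
    show ?thesis
    proof (cases k)
      case 0
      thus ?thesis using Suc.prems by simp
    next
      case (Suc k')
      have Ane: "A \<noteq> {}" using Suc.hyps(2) by auto
      have fin: "finite A" by fact
      have IH: "\<And>x j. x \<in> A - T \<Longrightarrow> (\<Sum>xs\<in>permutations_of_set (A - {x}). mpre T xs choose j) * (n choose card T)
              = fact n * (n choose (card T + j))"
      proof -
        fix x j assume x: "x \<in> A - T"
        have c: "card (A - {x}) = n" using Suc.hyps(2) x fin by simp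
        show "(\<Sum>xs\<in>permutations_of_set (A - {x}). mpre T xs choose j) * (n choose card T)
              = fact n * (n choose (card T + j))"
          using Suc.hyps(1)[of "A - {x}" j] c fin Suc.prems x by auto
      qed
      define P where "P j x = (\<Sum>xs\<in>permutations_of_set (A - {x}). mpre T xs choose j)" for j x
      have "(\<Sum>xs\<in>permutations_of_set A. mpre T xs choose k)
          = (\<Sum>x\<in>A. \<Sum>xs\<in>permutations_of_set (A - {x}). mpre T (x # xs) choose k)"
        by (rule sum_perms_Cons[OF fin Ane])
      also have "\<dots> = (\<Sum>x\<in>A - T. P k' x + P k x)"
      proof -
        have "(\<Sum>x\<in>A. \<Sum>xs\<in>permutations_of_set (A - {x}). mpre T (x # xs) choose k)
            = (\<Sum>x\<in>A - T. \<Sum>xs\<in>permutations_of_set (A - {x}). mpre T (x # xs) choose k)"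
          by (rule sum.mono_neutral_right) (use fin Suc(1) in \<open>auto simp: mpre_Cons \<open>k = Suc k'\<close>\<close>)
        also have "\<dots> = (\<Sum>x\<in>A - T. P k' x + P k x)"
          by (rule sum.cong) (auto simp: P_def mpre_Cons \<open>k = Suc k'\<close> sum.distrib)
        finally show ?thesis .
      qed
      finally have tot: "(\<Sum>xs\<in>permutations_of_set A. mpre T xs choose k) = (\<Sum>x\<in>A - T. P k' x + P k x)" .
      have each: "(P k' x + P k x) * (n choose card T) = fact n * (Suc n choose (card T + k))" if "x \<in> A - T" for x
      proof -
        have "(P k' x + P k x) * (n choose card T) = fact n * (n choose (card T + k')) + fact n * (n choose (card T + k))"
          using IH[OF that, of k'] IH[OF that, of k] unfolding P_def by (simp add: algebra_simps)
        also have "\<dots> = fact n * (Suc n choose (card T + k))"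
          by (simp add: \<open>k = Suc k'\<close> algebra_simps)
        finally show ?thesis .
      qed
      have cT: "card (A - T) = Suc n - card T" using Suc.prems Suc.hyps(2) by (simp add: card_Diff_subset finite_subset)
      have "(\<Sum>xs\<in>permutations_of_set A. mpre T xs choose k) * (n choose card T)
           = (Suc n - card T) * (fact n * (Suc n choose (card T + k)))"
        unfolding tot sum_distrib_right using each cT by simp
      hence eq1: "(\<Sum>xs\<in>permutations_of_set A. mpre T xs choose k) * (Suc n * (n choose card T))
           = Suc n * ((Suc n - card T) * (fact n * (Suc n choose (card T + k))))"
        by (metis mult.left_commute)
      have absorb: "(Suc n - card T) * (Suc n choose card T) = Suc n * (n choose card T)"
        using binomial_absorb_comp[of "Suc n" "card T"] by simp
      show ?thesis
      proof (cases "card T = Suc n")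
        case True
        hence "T = A" using Suc.prems Suc.hyps(2) by (metis card_subset_eq)
        have z1: "(\<Sum>xs\<in>permutations_of_set A. mpre T xs choose k) = 0"
          unfolding tot using \<open>T = A\<close> by simp
        have z2: "card A choose (card T + k) = 0" using True Suc.hyps(2) \<open>k = Suc k'\<close> by simp
        show ?thesis by (simp only: z1 z2 mult_0 mult_0_right)
      next
        case False
        have "card T \<le> card A" using Suc.prems by (intro card_mono) auto
        hence pos: "Suc n - card T > 0" using False Suc.hyps(2) by linarith
        define a where "a = Suc n - card T"
        define S where "S = (\<Sum>xs\<in>permutations_of_set A. mpre T xs choose k)"
        define X where "X = Suc n choose (card T + k)"
        have "a * (S * (Suc n choose card T)) = S * (a * (Suc n choose card T))" by (simp add: mult_ac)
        also have "\<dots> = S * (Suc n * (n choose card T))" using absorb unfolding a_def by simp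
        also have "\<dots> = Suc n * (a * (fact n * X))" using eq1 unfolding a_def S_def X_def by (simp add: mult_ac)
        also have "\<dots> = a * (fact (Suc n) * X)" by (simp add: fact_Suc mult_ac del: of_nat_Suc)
        finally have "(Suc n - card T) * ((\<Sum>xs\<in>permutations_of_set A. mpre T xs choose k) * (Suc n choose card T))
            = (Suc n - card T) * (fact (Suc n) * (Suc n choose (card T + k)))" unfolding a_def S_def X_def .
        hence "(\<Sum>xs\<in>permutations_of_set A. mpre T xs choose k) * (Suc n choose card T)
            = fact (Suc n) * (Suc n choose (card T + k))"
          using pos by simp
        thus ?thesis using Suc.hyps(2) by simp
      qed
    qed
  qed
qed


definition rkp :: "nat list \<Rightarrow> nat set \<Rightarrow> nat" where
  "rkp xs U = (LEAST r. U \<subseteq> set (take r xs))"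

definition Vp :: "nat list \<Rightarrow> nat set \<Rightarrow> nat set" where
  "Vp xs U = set (take (rkp xs U) xs)"

lemma Vp_sup: "U \<subseteq> set xs \<Longrightarrow> U \<subseteq> Vp xs U"
  unfolding Vp_def rkp_def by (rule LeastI[of _ "length xs"]) simp

lemma Vp_cmp: "Vp xs U \<subseteq> Vp xs U' \<or> Vp xs U' \<subseteq> Vp xs U"
proof (cases "rkp xs U \<le> rkp xs U'")
  case True thus ?thesis unfolding Vp_def by (intro disjI1 set_take_subset_set_take)
next
  case False thus ?thesis unfolding Vp_def by (intro disjI2 set_take_subset_set_take) simp
qed

lemma Vp_fin: "finite (Vp xs U)"
  unfolding Vp_def by simp

lemma take_all_P:
  assumes "\<forall>x\<in>set (take r xs). P x"
  shows "set (take r xs) \<subseteq> set (takeWhile P xs)"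
proof -
  define p where "p = length (takeWhile P xs)"
  have tw: "takeWhile P xs = take p xs" unfolding p_def by (rule takeWhile_eq_take)
  have "min r (length xs) \<le> p"
  proof (rule ccontr)
    assume "\<not> min r (length xs) \<le> p"
    hence pr: "p < r" "p < length xs" by auto
    have "\<not> P (xs ! p)" unfolding p_def by (rule nth_length_takeWhile) (use pr in \<open>simp add: p_def\<close>)
    moreover have "xs ! p \<in> set (take r xs)"
    proof -
      have "take r xs ! p = xs ! p" using pr by (intro nth_take) 
      moreover have "p < length (take r xs)" using pr by simp
      ultimately show ?thesis by (metis nth_mem)
    qed
    ultimately show False using assms by blast
  qed
  hence "set (take (min r (length xs)) xs) \<subseteq> set (take p xs)" by (rule set_take_subset_set_take)
  moreover have "take (min r (length xs)) xs = take r xs" by (simp add: min_def)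
  ultimately show ?thesis using tw by simp
qed

lemma Vp_disj:
  assumes "U \<subseteq> set xs"
  shows "T \<inter> Vp xs U = {} \<longleftrightarrow> U \<subseteq> set (takeWhile (\<lambda>x. x \<notin> T) xs)"
proof
  assume h: "T \<inter> Vp xs U = {}"
  have "set (take (rkp xs U) xs) \<subseteq> set (takeWhile (\<lambda>x. x \<notin> T) xs)"
    by (rule take_all_P) (use h in \<open>auto simp: Vp_def\<close>)
  thus "U \<subseteq> set (takeWhile (\<lambda>x. x \<notin> T) xs)" using Vp_sup[OF assms] unfolding Vp_def by blast
next
  assume h: "U \<subseteq> set (takeWhile (\<lambda>x. x \<notin> T) xs)"
  define p where "p = length (takeWhile (\<lambda>x. x \<notin> T) xs)"
  have tw: "takeWhile (\<lambda>x. x \<notin> T) xs = take p xs" unfolding p_def by (rule takeWhile_eq_take)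
  have "rkp xs U \<le> p" unfolding rkp_def by (rule Least_le) (use h tw in auto)
  hence "Vp xs U \<subseteq> set (take p xs)" unfolding Vp_def by (rule set_take_subset_set_take)
  moreover have "T \<inter> set (take p xs) = {}" using tw[symmetric] by (auto dest: set_takeWhileD)
  ultimately show "T \<inter> Vp xs U = {}" by blast
qed

lemma card_takeWhile: "distinct xs \<Longrightarrow> card (set (takeWhile P xs)) = length (takeWhile P xs)"
  by (metis distinct_card distinct_take takeWhile_eq_take)

lemma sum_Pow_card:
  assumes "finite A"
  shows "(\<Sum>U\<in>Pow A. f (card U)) = (\<Sum>k\<le>card A. (card A choose k) * f k)"
proof -
  have "(\<Sum>U\<in>Pow A. f (card U)) = (\<Sum>k\<in>{..card A}. \<Sum>U\<in>{U\<in>Pow A. card U = k}. f (card U))"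
  proof (rule sum.group[symmetric])
    show "finite (Pow A)" using assms by simp
    show "finite {..card A}" by simp
    show "card ` Pow A \<subseteq> {..card A}"
    proof
      fix x assume "x \<in> card ` Pow A"
      then obtain U where "U \<subseteq> A" "x = card U" by auto
      thus "x \<in> {..card A}" using card_mono[OF assms] by simp
    qed
  qed
  also have "\<dots> = (\<Sum>k\<le>card A. (card A choose k) * f k)"
  proof (rule sum.cong)
    fix k assume "k \<in> {..card A}"
    have "{U\<in>Pow A. card U = k} = {U. U \<subseteq> A \<and> card U = k}" by auto
    hence c: "card {U\<in>Pow A. card U = k} = card A choose k" using n_subsets[OF assms] by simp
    have "(\<Sum>U\<in>{U\<in>Pow A. card U = k}. f (card U)) = (\<Sum>U\<in>{U\<in>Pow A. card U = k}. f k)"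
      by (rule sum.cong) auto
    also have "\<dots> = card {U\<in>Pow A. card U = k} * f k" by simp
    finally show "(\<Sum>U\<in>{U\<in>Pow A. card U = k}. f (card U)) = (card A choose k) * f k" unfolding c .
  qed simp
  finally show ?thesis .
qed

lemma comb_users_Sigma: "comb_users Lam Kv = Sigma (Pow {..<Lam}) (\<lambda>U. {..<Kv (card U)})"
  unfolding comb_users_def by auto

lemma count_users:
  assumes xs: "xs \<in> permutations_of_set {..<Lam}"
  shows "(\<Sum>u\<in>comb_users Lam Kv. (if T \<inter> Vp xs (fst u) = {} then 1 else 0 :: nat))
       = (\<Sum>k\<le>Lam. Kv k * (mpre T xs choose k))"
proof -
  have dxs: "distinct xs" "set xs = {..<Lam}" using xs by (auto simp: permutations_of_set_def)
  define P where "P = set (takeWhile (\<lambda>x. x \<notin> T) xs)"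
  have PL: "P \<subseteq> {..<Lam}" unfolding P_def using dxs by (auto dest: set_takeWhileD)
  have cP: "card P = mpre T xs" unfolding P_def mpre_def using card_takeWhile[OF dxs(1)] .
  have "(\<Sum>u\<in>comb_users Lam Kv. (if T \<inter> Vp xs (fst u) = {} then 1 else 0 :: nat))
      = (\<Sum>U\<in>Pow {..<Lam}. \<Sum>j<Kv (card U). (if T \<inter> Vp xs U = {} then 1 else 0 :: nat))"
    unfolding comb_users_Sigma by (subst sum.Sigma) (simp_all add: split_def)
  also have "\<dots> = (\<Sum>U\<in>Pow {..<Lam}. if U \<subseteq> P then Kv (card U) else 0)"
  proof (rule sum.cong[OF refl])
    fix U assume U: "U \<in> Pow {..<Lam}"
    have "T \<inter> Vp xs U = {} \<longleftrightarrow> U \<subseteq> P"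
      unfolding P_def by (rule Vp_disj) (use U dxs(2) in auto)
    thus "(\<Sum>j<Kv (card U). (if T \<inter> Vp xs U = {} then 1 else 0 :: nat)) = (if U \<subseteq> P then Kv (card U) else 0)"
      by simp
  qed
  also have "\<dots> = (\<Sum>U\<in>Pow P. Kv (card U))"
  proof -
    have e: "{U \<in> Pow {..<Lam}. U \<subseteq> P} = Pow P" using PL by auto
    have "(\<Sum>U\<in>Pow {..<Lam}. if U \<subseteq> P then Kv (card U) else 0) = (\<Sum>U\<in>{U \<in> Pow {..<Lam}. U \<subseteq> P}. Kv (card U))"
      by (rule sum.inter_filter[symmetric]) simp
    thus ?thesis unfolding e .
  qed
  also have "\<dots> = (\<Sum>k\<le>card P. (card P choose k) * Kv k)"
    by (rule sum_Pow_card) (rule finite_subset[OF PL], simp)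
  also have "\<dots> = (\<Sum>k\<le>Lam. (card P choose k) * Kv k)"
  proof (rule sum.mono_neutral_left)
    have "card P \<le> Lam" using card_mono[OF finite_lessThan PL] by simp
    thus "{..card P} \<subseteq> {..Lam}" by auto
  qed (auto simp: binomial_eq_0)
  finally show ?thesis unfolding cP by (metis (no_types, lifting) mult.commute sum.cong)
qed


definition hh :: "nat \<Rightarrow> nat \<Rightarrow> nat \<Rightarrow> real" where
  "hh L l s = real (L choose (s + l)) / real (L choose s)"

lemma binom_step: "Suc j * (n choose Suc j) = (n - j) * (n choose j)"
  using binomial_absorption[of j n] binomial_absorb_comp[of n j] by simp

lemma binom_step_real: "real (Suc j) * real (n choose Suc j) = real (n - j) * real (n choose j)"
  using binom_step[of j n] by (metis of_nat_mult)

lemma hh_step: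
  assumes "k < L"
  shows "hh L l (Suc k) * (real (k + l + 1) * real (L - k)) = hh L l k * (real (L - (k + l)) * real (k + 1))"
proof -
  define a where "a = real (L choose k)"
  define a1 where "a1 = real (L choose Suc k)"
  define b where "b = real (L choose (k + l))"
  define b1 where "b1 = real (L choose (Suc k + l))"
  have apos: "a > 0" unfolding a_def using assms by simp
  have a1pos: "a1 > 0" unfolding a1_def using assms by simp
  have ea: "real (k+1) * a1 = real (L - k) * a" unfolding a_def a1_def using binom_step_real[of k L] by simp
  have eb: "real (k+l+1) * b1 = real (L - (k+l)) * b" unfolding b_def b1_def using binom_step_real[of "k+l" L] by simp
  have "hh L l (Suc k) * (real (k + l + 1) * real (L - k)) = (real (k+l+1) * b1) * real (L - k) / a1"
    unfolding hh_def b1_def a1_def by simp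
  also have "\<dots> = real (L - (k+l)) * b * real (L - k) / a1" using eb by simp
  also have "\<dots> = real (L - (k+l)) * b * (real (L - k) * a) / (a1 * a)" using apos by simp
  also have "\<dots> = real (L - (k+l)) * b * (real (k+1) * a1) / (a1 * a)" using ea by simp
  also have "\<dots> = hh L l k * (real (L - (k + l)) * real (k + 1))"
    unfolding hh_def a_def b_def using a1pos apos by (simp add: a_def field_simps)
  finally show ?thesis .
qed

lemma hh_nonneg: "hh L l s \<ge> 0"
  unfolding hh_def by simp

lemma hh_decr:
  assumes "k < L"
  shows "hh L l (Suc k) \<le> hh L l k"
proof -
  define D where "D = real (k + l + 1) * real (L - k)"
  define A where "A = real (L - (k + l)) * real (k + 1)"
  have Dpos: "D > 0" unfolding D_def using assms by simp
  have m1: "real (L - (k + l)) \<le> real (L - k)" "real (k + 1) \<le> real (k + l + 1)" by simp_all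
  have AD: "A \<le> D" unfolding A_def D_def using mult_mono[OF m1(1) m1(2)] by (simp add: mult.commute)
  have A0: "A \<ge> 0" unfolding A_def by simp
  have e: "hh L l (Suc k) * D = hh L l k * A" unfolding D_def A_def by (rule hh_step[OF assms])
  have "hh L l k * A \<le> hh L l k * D" using AD hh_nonneg by (intro mult_left_mono) auto
  hence "hh L l (Suc k) * D \<le> hh L l k * D" using e by simp
  thus ?thesis using Dpos by simp
qed

lemma E_nonneg:
  fixes k l L :: nat
  assumes "k + 2 \<le> L"
  shows "real ((k + l + 1) * (L - k)) * real ((k + l + 2) * (L - Suc k))
       + real ((L - (k + l)) * (k + 1)) * real ((L - (Suc k + l)) * (k + 2))
       - 2 * real ((L - (k + l)) * (k + 1)) * real ((k + l + 2) * (L - Suc k)) \<ge> 0"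
proof (cases "L \<le> k + l")
  case True
  hence "L - (k + l) = 0" by simp
  thus ?thesis by simp
next
  case False
  define m where "m = L - k"
  have Lk: "L = k + m" using assms unfolding m_def by simp
  have c1: "real (L - k) = real m" unfolding m_def by simp
  have c2: "real (L - Suc k) = real m - 1" using assms unfolding m_def by simp
  have c3: "real (L - (k + l)) = real m - real l" using False unfolding m_def by simp
  have c4: "real (L - (Suc k + l)) = real m - real l - 1" using False unfolding m_def by simp
  have lm: "real l + 1 \<le> real m" using False unfolding m_def by simp
  define x where "x = real k" define y where "y = real l" define z where "z = real m"
  have x0: "x \<ge> 0" and y0: "y \<ge> 0" unfolding x_def y_def by simp_all
  have yz: "y + 1 \<le> z" using lm unfolding y_def z_def .
  have "real ((k + l + 1) * (L - k)) * real ((k + l + 2) * (L - Suc k))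
       + real ((L - (k + l)) * (k + 1)) * real ((L - (Suc k + l)) * (k + 2))
       - 2 * real ((L - (k + l)) * (k + 1)) * real ((k + l + 2) * (L - Suc k))
     = ((x+y+1)*z) * ((x+y+2)*(z-1)) + ((z-y)*(x+1)) * ((z-y-1)*(x+2)) - 2*((z-y)*(x+1))*((x+y+2)*(z-1))"
    unfolding of_nat_mult c1 c2 c3 c4 x_def y_def z_def by (simp add: algebra_simps)
  also have "\<dots> = y * (x + z + 1) * ((y+1)*(z-1) + (y-1)*(x+1))"
    by (simp add: algebra_simps)
  finally have eq: "real ((k + l + 1) * (L - k)) * real ((k + l + 2) * (L - Suc k))
       + real ((L - (k + l)) * (k + 1)) * real ((L - (Suc k + l)) * (k + 2))
       - 2 * real ((L - (k + l)) * (k + 1)) * real ((k + l + 2) * (L - Suc k))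
     = y * (x + z + 1) * ((y+1)*(z-1) + (y-1)*(x+1))" .
  show ?thesis
  proof (cases "l = 0")
    case True
    hence "y = 0" unfolding y_def by simp
    thus ?thesis unfolding eq by simp
  next
    case False
    hence y1: "y \<ge> 1" unfolding y_def by simp
    have "(y+1)*(z-1) \<ge> 0" using yz y0 by simp
    moreover have "(y-1)*(x+1) \<ge> 0" using y1 x0 by simp
    ultimately have "(y+1)*(z-1) + (y-1)*(x+1) \<ge> 0" by linarith
    moreover have "y * (x + z + 1) \<ge> 0" using y0 x0 yz by simp
    ultimately show ?thesis unfolding eq by simp
  qed
qed

lemma hh_conv:
  assumes "k + 2 \<le> L"
  shows "hh L l k + hh L l (k + 2) \<ge> 2 * hh L l (k + 1)"
proof -
  define h0 where "h0 = hh L l k"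
  define h1 where "h1 = hh L l (Suc k)"
  define h2 where "h2 = hh L l (Suc (Suc k))"
  define D0 where "D0 = real ((k + l + 1) * (L - k))"
  define A0 where "A0 = real ((L - (k + l)) * (k + 1))"
  define D1 where "D1 = real ((k + l + 2) * (L - Suc k))"
  define A1 where "A1 = real ((L - (Suc k + l)) * (k + 2))"
  have e0: "h1 * D0 = h0 * A0" unfolding h1_def h0_def D0_def A0_def of_nat_mult
    by (rule hh_step) (use assms in simp)
  have e1: "h2 * D1 = h1 * A1" unfolding h1_def h2_def D1_def A1_def of_nat_mult
    using hh_step[of "Suc k" L l] assms by (simp add: add.commute add.left_commute)
  have D0p: "D0 > 0" unfolding D0_def by (rule of_nat_0_less_iff[THEN iffD2]) (use assms in simp)
  have D1p: "D1 > 0" unfolding D1_def by (rule of_nat_0_less_iff[THEN iffD2]) (use assms in simp)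
  have E: "D0 * D1 + A0 * A1 - 2 * A0 * D1 \<ge> 0"
    unfolding D0_def D1_def A0_def A1_def using E_nonneg[OF assms, of l] by simp
  have h0p: "h0 \<ge> 0" unfolding h0_def by (rule hh_nonneg)
  have "(h0 + h2 - 2 * h1) * (D0 * D1) = h0 * D0 * D1 + (h2 * D1) * D0 - 2 * (h1 * D0) * D1"
    by (simp add: algebra_simps)
  also have "\<dots> = h0 * D0 * D1 + (h1 * D0) * A1 - 2 * (h0 * A0) * D1"
    unfolding e1 e0[symmetric] by (simp add: algebra_simps)
  also have "\<dots> = h0 * (D0 * D1 + A0 * A1 - 2 * A0 * D1)"
    unfolding e0 by (simp add: algebra_simps)
  also have "\<dots> \<ge> 0" using h0p E by simp
  finally have "(h0 + h2 - 2 * h1) * (D0 * D1) \<ge> 0" .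
  moreover have "D0 * D1 > 0" using D0p D1p by simp
  ultimately have "h0 + h2 - 2 * h1 \<ge> 0" using zero_le_mult_iff by (metis not_less)
  thus ?thesis unfolding h0_def h1_def h2_def by (simp add: numeral_2_eq_2)
qed

lemma support_line:
  fixes f :: "nat \<Rightarrow> real"
  assumes conv: "\<And>k. k + 2 \<le> L \<Longrightarrow> f k + f (k + 2) \<ge> 2 * f (k + 1)"
    and tL: "t < L" and sL: "s \<le> L"
  shows "f s \<ge> f t + (real s - real t) * (f (t + 1) - f t)"
proof -
  define \<Delta> where "\<Delta> k = f (k + 1) - f k" for k
  have mono: "\<Delta> i \<le> \<Delta> j" if "i \<le> j" "j + 1 \<le> L" for i j
    using that
  proof (induction j)
    case 0 thus ?case by simp
  next
    case (Suc j)
    show ?case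
    proof (cases "i = Suc j")
      case True thus ?thesis by simp
    next
      case False
      hence "\<Delta> i \<le> \<Delta> j" using Suc by simp
      moreover have "\<Delta> j \<le> \<Delta> (Suc j)" using conv[of j] Suc.prems unfolding \<Delta>_def by (simp add: algebra_simps)
      ultimately show ?thesis by simp
    qed
  qed
  show ?thesis
  proof (cases "t \<le> s")
    case True
    have "f (t + j) \<ge> f t + real j * \<Delta> t" if "t + j \<le> L" for j
      using that
    proof (induction j)
      case 0 thus ?case by simp
    next
      case (Suc j)
      have "f (t + Suc j) = f (t + j) + \<Delta> (t + j)" unfolding \<Delta>_def by simp
      moreover have "\<Delta> t \<le> \<Delta> (t + j)" using mono[of t "t+j"] Suc.prems by simp
      ultimately show ?case using Suc by (simp add: algebra_simps)
    qed
    from this[of "s - t"] True sL show ?thesis unfolding \<Delta>_def by (simp add: of_nat_diff)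
  next
    case False
    have "f (t - j) \<ge> f t - real j * \<Delta> t" if "j \<le> t" for j
      using that
    proof (induction j)
      case 0 thus ?case by simp
    next
      case (Suc j)
      have "f (t - j) = f (t - Suc j) + \<Delta> (t - Suc j)" unfolding \<Delta>_def using Suc.prems
        by (simp add: Suc_diff_Suc)
      moreover have "\<Delta> (t - Suc j) \<le> \<Delta> t" using mono[of "t - Suc j" t] tL by simp
      ultimately show ?case using Suc by (simp add: algebra_simps)
    qed
    from this[of "t - s"] False show ?thesis unfolding \<Delta>_def by (simp add: of_nat_diff algebra_simps)
  qed
qed

lemma hh_ge_last: "s \<le> L \<Longrightarrow> hh L l s \<ge> hh L l L"
proof (induction "L - s" arbitrary: s)
  case 0 thus ?case by simp
next
  case (Suc n)
  hence "hh L l (Suc s) \<ge> hh L l L" by simp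
  moreover have "hh L l (Suc s) \<le> hh L l s" using Suc by (intro hh_decr) simp
  ultimately show ?case by simp
qed

lemma G_support:
  fixes Kv :: "nat \<Rightarrow> nat"
  assumes "t \<le> L"
  shows "\<exists>\<alpha>\<le>0. \<forall>s\<le>L. (\<Sum>l\<le>L. real (Kv l) * hh L l s) \<ge> (\<Sum>l\<le>L. real (Kv l) * hh L l t) + \<alpha> * (real s - real t)"
proof -
  define a where "a l = (if t < L then hh L l (t + 1) - hh L l t else 0)" for l
  have a0: "a l \<le> 0" for l unfolding a_def using hh_decr[of t L l] by simp
  have each: "hh L l s \<ge> hh L l t + a l * (real s - real t)" if "s \<le> L" for l s
  proof (cases "t < L")
    case True
    thus ?thesis unfolding a_def using support_line[of L "hh L l", OF hh_conv True that] by (simp add: algebra_simps)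
  next
    case False
    hence "t = L" using assms by simp
    thus ?thesis unfolding a_def using hh_ge_last[OF that] by simp
  qed
  show ?thesis
  proof (intro exI[of _ "\<Sum>l\<le>L. real (Kv l) * a l"] conjI allI impI)
    show "(\<Sum>l\<le>L. real (Kv l) * a l) \<le> 0" using a0 by (intro sum_nonpos) (simp add: mult_nonneg_nonpos)
    fix s assume s: "s \<le> L"
    have "(\<Sum>l\<le>L. real (Kv l) * hh L l t) + (\<Sum>l\<le>L. real (Kv l) * a l) * (real s - real t)
        = (\<Sum>l\<le>L. real (Kv l) * (hh L l t + a l * (real s - real t)))"
    proof -
      have "(\<Sum>l\<le>L. real (Kv l) * (hh L l t + a l * (real s - real t)))
          = (\<Sum>l\<le>L. real (Kv l) * hh L l t) + (\<Sum>l\<le>L. real (Kv l) * a l * (real s - real t))"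
        by (simp add: distrib_left sum.distrib mult.assoc)
      also have "\<dots> = (\<Sum>l\<le>L. real (Kv l) * hh L l t) + (\<Sum>l\<le>L. real (Kv l) * a l) * (real s - real t)"
        by (simp add: sum_distrib_right)
      finally show ?thesis by simp
    qed
    also have "\<dots> \<le> (\<Sum>l\<le>L. real (Kv l) * hh L l s)"
      using each[OF s] by (intro sum_mono mult_left_mono) auto
    finally show "(\<Sum>l\<le>L. real (Kv l) * hh L l s) \<ge> (\<Sum>l\<le>L. real (Kv l) * hh L l t) + (\<Sum>l\<le>L. real (Kv l) * a l) * (real s - real t)" .
  qed
qed


lemma card_filter_sum: fixes B :: nat shows "card {i. i < B \<and> P i} = (\<Sum>i<B. if P i then 1 else 0 :: nat)"
proof -
  have "{i. i < B \<and> P i} = {i\<in>{..<B}. P i}" by auto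
  hence "card {i. i < B \<and> P i} = (\<Sum>i\<in>{i\<in>{..<B}. P i}. 1 :: nat)" by simp
  also have "\<dots> = (\<Sum>i<B. if P i then 1 else 0 :: nat)" by (rule sum.inter_filter) (rule finite_lessThan)
  finally show ?thesis .
qed

lemma shift_back:
  fixes N s x :: nat
  assumes x: "x < N"
  shows "(N - s mod N + (s + x)) mod N = x"
proof -
  have m: "s mod N < N" using x by simp
  have d: "s div N * N + s mod N = s" by (rule div_mult_mod_eq)
  have "N - s mod N + (s + x) = x + N + (s div N) * N" using m d by linarith
  hence "(N - s mod N + (s + x)) mod N = (x + N + (s div N) * N) mod N" by (rule arg_cong[where f="\<lambda>z. z mod N"])
  also have "\<dots> = x" using x by simp
  finally show ?thesis .
qed

lemma shift_inj:
  fixes N s :: nat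
  shows "inj_on (\<lambda>x. (s + x) mod N) {..<N}"
proof (rule inj_onI)
  fix x y assume x: "x \<in> {..<N}" and y: "y \<in> {..<N}" and e: "(s + x) mod N = (s + y) mod N"
  have "x = (N - s mod N + (s + x)) mod N" using shift_back x by simp
  also have "\<dots> = (N - s mod N + (s + x) mod N) mod N" by (simp add: mod_add_right_eq)
  also have "\<dots> = (N - s mod N + (s + y) mod N) mod N" using e by simp
  also have "\<dots> = (N - s mod N + (s + y)) mod N" by (simp add: mod_add_right_eq)
  also have "\<dots> = y" using shift_back y by simp
  finally show "x = y" .
qed

lemma shift_sum:
  fixes f :: "nat \<Rightarrow> 'a::comm_monoid_add"
  assumes "a < N"
  shows "(\<Sum>s<N. f ((a + s) mod N)) = (\<Sum>n<N. f n)"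
proof -
  have inj: "inj_on (\<lambda>s. (a + s) mod N) {..<N}"
  proof (rule inj_onI)
    fix x y assume x: "x \<in> {..<N}" and y: "y \<in> {..<N}" and e: "(a + x) mod N = (a + y) mod N"
    have aN: "a \<le> N" using assms by simp
    have "x = (N + x) mod N" using x by simp
    also have "\<dots> = ((N - a) + (a + x)) mod N" using aN by simp
    also have "\<dots> = ((N - a) + (a + x) mod N) mod N" by (simp add: mod_add_right_eq)
    also have "\<dots> = ((N - a) + (a + y) mod N) mod N" using e by simp
    also have "\<dots> = ((N - a) + (a + y)) mod N" by (simp add: mod_add_right_eq)
    also have "\<dots> = (N + y) mod N" using aN by simp
    also have "\<dots> = y" using y by simp
    finally show "x = y" .
  qed
  have img: "(\<lambda>s. (a + s) mod N) ` {..<N} = {..<N}"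
  proof (rule endo_inj_surj)
    show "(\<lambda>s. (a + s) mod N) ` {..<N} \<subseteq> {..<N}" using assms by auto
  qed (use inj in auto)
  have "(\<Sum>n<N. f n) = (\<Sum>n\<in>(\<lambda>s. (a + s) mod N) ` {..<N}. f n)" using img by simp
  also have "\<dots> = (\<Sum>s<N. f ((a + s) mod N))" by (rule sum.reindex[OF inj, unfolded comp_def])
  finally show ?thesis by simp
qed

lemma finite_comb_users: "finite (comb_users Lam Kv)"
  unfolding comb_users_Sigma by auto

lemma double_count:
  assumes unc: "uncoded_placement Lam N B pl"
  shows "(\<Sum>n<N. \<Sum>i<B. card (pl n i)) = (\<Sum>l<Lam. card (cache_content N B pl l))"
proof -
  have c1: "card (pl n i) = (\<Sum>l<Lam. if l \<in> pl n i then 1 else 0 :: nat)" if "n < N" "i < B" for n i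
  proof -
    have sub: "pl n i \<subseteq> {..<Lam}" using unc that unfolding uncoded_placement_def by blast
    have "(\<Sum>l<Lam. if l \<in> pl n i then 1 else 0 :: nat) = (\<Sum>l\<in>{l\<in>{..<Lam}. l \<in> pl n i}. 1)"
      by (rule sum.inter_filter[symmetric]) simp
    also have "{l\<in>{..<Lam}. l \<in> pl n i} = pl n i" using sub by auto
    finally show ?thesis by simp
  qed
  have c2: "card (cache_content N B pl l) = (\<Sum>n<N. \<Sum>i<B. if l \<in> pl n i then 1 else 0 :: nat)" for l
  proof -
    have "cache_content N B pl l = {x \<in> {..<N} \<times> {..<B}. l \<in> pl (fst x) (snd x)}"
      unfolding cache_content_def by auto
    hence "card (cache_content N B pl l) = (\<Sum>x\<in>{..<N} \<times> {..<B}. if l \<in> pl (fst x) (snd x) then 1 else 0 :: nat)"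
      by (simp add: sum.inter_filter[symmetric])
    also have "\<dots> = (\<Sum>n<N. \<Sum>i<B. if l \<in> pl n i then 1 else 0 :: nat)"
      by (simp add: sum.cartesian_product split_def)
    finally show ?thesis .
  qed
  have "(\<Sum>n<N. \<Sum>i<B. card (pl n i)) = (\<Sum>n<N. \<Sum>i<B. \<Sum>l<Lam. if l \<in> pl n i then 1 else 0 :: nat)"
    using c1 by (intro sum.cong) auto
  also have "\<dots> = (\<Sum>n<N. \<Sum>l<Lam. \<Sum>i<B. if l \<in> pl n i then 1 else 0 :: nat)"
    by (rule sum.cong[OF refl], rule sum.swap)
  also have "\<dots> = (\<Sum>l<Lam. \<Sum>n<N. \<Sum>i<B. if l \<in> pl n i then 1 else 0 :: nat)"
    by (rule sum.swap)
  also have "\<dots> = (\<Sum>l<Lam. card (cache_content N B pl l))" using c2 by simp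
  finally show ?thesis .
qed

lemma total_size:
  assumes unc: "uncoded_placement Lam N B pl"
    and csz: "respects_cache_size Lam N B (real t * real N / real Lam) pl"
  shows "real (\<Sum>n<N. \<Sum>i<B. card (pl n i)) \<le> real t * real N * real B"
proof (cases "Lam = 0")
  case True
  have "card (pl n i) = 0" if "n < N" "i < B" for n i
    using unc that True unfolding uncoded_placement_def by auto
  hence "(\<Sum>n<N. \<Sum>i<B. card (pl n i)) = 0" by simp
  thus ?thesis by simp
next
  case False
  have "real (\<Sum>n<N. \<Sum>i<B. card (pl n i)) = (\<Sum>l<Lam. real (card (cache_content N B pl l)))"
    unfolding double_count[OF unc] by simp
  also have "\<dots> \<le> (\<Sum>l<Lam. real t * real N / real Lam * real B)"
    using csz unfolding respects_cache_size_def by (intro sum_mono) auto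
  also have "\<dots> = real t * real N * real B" using False by simp
  finally show ?thesis .
qed

lemma phi_real:
  assumes "T \<subseteq> {..<Lam}"
  shows "real (\<Sum>xs\<in>permutations_of_set {..<Lam}. mpre T xs choose k) = fact Lam * hh Lam k (card T)"
proof -
  have cT: "card T \<le> Lam" using card_mono[OF finite_lessThan assms] by simp
  have "(\<Sum>xs\<in>permutations_of_set {..<Lam}. mpre T xs choose k) * (Lam choose card T)
        = fact Lam * (Lam choose (card T + k))"
    using phi[of "{..<Lam}" T k] assms by simp
  hence "real (\<Sum>xs\<in>permutations_of_set {..<Lam}. mpre T xs choose k) * real (Lam choose card T)
        = fact Lam * real (Lam choose (card T + k))"
    by (metis of_nat_fact of_nat_mult)
  moreover have "real (Lam choose card T) > 0" using cT by simp
  ultimately show ?thesis unfolding hh_def by (simp add: field_simps)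
qed


lemma converse:
  fixes Lam N t :: nat and Kv :: "nat \<Rightarrow> nat"
  assumes Ncard: "card (comb_users Lam Kv) \<le> N"
    and tL: "t \<le> Lam" and Bp: "B > 0"
    and unc: "uncoded_placement Lam N B pl"
    and csz: "respects_cache_size Lam N B (real t * real N / real Lam) pl"
    and ach: "achieves_load (comb_users Lam Kv) comb_conn N B pl R'"
    and ne: "comb_users Lam Kv \<noteq> {}"
  shows "(\<Sum>l\<le>Lam. real (Kv l) * hh Lam l t) \<le> R'"
proof -
  define users where "users = comb_users Lam Kv"
  have finU: "finite users" unfolding users_def by (rule finite_comb_users)
  obtain Lf where dl: "\<forall>d\<in>demands users N. delivers users comb_conn N B pl d (Lf d)"
    and mx: "Max ((\<lambda>d. real (Lf d) / real B) ` demands users N) = R'"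
    using ach unfolding achieves_load_def users_def by blast
  have finD: "finite (demands users N)" unfolding demands_def by (rule finite_PiE) (use finU in auto)
  have Lf_le: "real (Lf d) \<le> R' * real B" if "d \<in> demands users N" for d
  proof -
    have "real (Lf d) / real B \<le> R'" unfolding mx[symmetric] by (rule Max_ge) (use finD that in auto)
    thus ?thesis using Bp by (simp add: divide_le_eq)
  qed
  have Npos: "N > 0"
  proof -
    have "card users > 0" using ne finU unfolding users_def by (simp add: card_gt_0_iff)
    thus ?thesis using Ncard unfolding users_def by simp
  qed
  obtain e where eimg: "e ` users \<subseteq> {..<N}" and einj: "inj_on e users"
    using card_le_inj[of users "{..<N}"] finU Ncard unfolding users_def by auto
  define ds where "ds s = restrict (\<lambda>u. (e u + s) mod N) users" for s
  have ds_dem: "ds s \<in> demands users N" for s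
    unfolding ds_def demands_def using Npos by simp
  have ds_inj: "inj_on (ds s) users" for s
  proof (rule inj_onI)
    fix u w assume u: "u \<in> users" and w: "w \<in> users" and eq: "ds s u = ds s w"
    have eu: "e u < N" and ew: "e w < N" using eimg u w by auto
    have "(e u + s) mod N = (e w + s) mod N" using eq u w unfolding ds_def by simp
    have "e u = e w"
    proof -
      have "(\<lambda>x. (s + x) mod N) (e u) = (\<lambda>x. (s + x) mod N) (e w)"
        using \<open>(e u + s) mod N = (e w + s) mod N\<close> by (simp add: add.commute)
      moreover have "inj_on (\<lambda>x. (s + x) mod N) {..<N}"
        using shift_inj[of s N] .
      ultimately show ?thesis using eu ew by (auto dest: inj_onD)
    qed
    thus "u = w" using einj u w by (auto dest: inj_onD)
  qed
  define P where "P = permutations_of_set {..<Lam}"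
  have finP: "finite P" unfolding P_def by simp
  define cnt where "cnt n (u :: nat set \<times> nat) xs = card {i. i < B \<and> pl n i \<inter> Vp xs (fst u) = {}}" for n u xs
  have gen: "(\<Sum>u\<in>users. cnt (ds s u) u xs) \<le> Lf (ds s)" if xs: "xs \<in> P" for s xs
  proof -
    have sxs: "set xs = {..<Lam}" using xs unfolding P_def by (auto simp: permutations_of_set_def)
    show ?thesis unfolding cnt_def
    proof (rule genie[of users comb_conn N B pl "ds s" "Lf (ds s)" "\<lambda>u. Vp xs (fst u)"])
      show "finite users" by fact
      show "delivers users comb_conn N B pl (ds s) (Lf (ds s))" using dl ds_dem by blast
      show "\<forall>u\<in>users. ds s u < N" using Npos unfolding ds_def by simp
      show "inj_on (ds s) users" by (rule ds_inj)
      show "\<forall>u\<in>users. comb_conn u \<subseteq> Vp xs (fst u)"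
      proof
        fix u assume "u \<in> users"
        hence "fst u \<subseteq> set xs" unfolding users_def comb_users_def sxs by auto
        thus "comb_conn u \<subseteq> Vp xs (fst u)" unfolding comb_conn_def by (rule Vp_sup)
      qed
      show "\<forall>u\<in>users. finite (Vp xs (fst u))" by (simp add: Vp_fin)
      show "\<forall>u\<in>users. \<forall>w\<in>users. Vp xs (fst u) \<subseteq> Vp xs (fst w) \<or> Vp xs (fst w) \<subseteq> Vp xs (fst u)"
        by (simp add: Vp_cmp)
    qed
  qed
  define TOT where "TOT = (\<Sum>s<N. \<Sum>xs\<in>P. \<Sum>u\<in>users. cnt (ds s u) u xs)"
  have TOT_le: "real TOT \<le> real N * real (card P) * (R' * real B)"
  proof -
    have "TOT \<le> (\<Sum>s<N. \<Sum>xs\<in>P. Lf (ds s))" unfolding TOT_def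
    proof (rule sum_mono)
      fix s assume "s \<in> {..<N}"
      show "(\<Sum>xs\<in>P. \<Sum>u\<in>users. cnt (ds s u) u xs) \<le> (\<Sum>xs\<in>P. Lf (ds s))"
      proof (rule sum_mono)
        fix xs assume "xs \<in> P"
        thus "(\<Sum>u\<in>users. cnt (ds s u) u xs) \<le> Lf (ds s)" by (rule gen)
      qed
    qed
    hence "real TOT \<le> real (\<Sum>s<N. \<Sum>xs\<in>P. Lf (ds s))" by (simp only: of_nat_le_iff)
    also have "\<dots> = (\<Sum>s<N. \<Sum>xs\<in>P. real (Lf (ds s)))" by simp
    also have "\<dots> \<le> (\<Sum>s<N. \<Sum>xs\<in>P. R' * real B)"
    proof (rule sum_mono)
      fix s assume "s \<in> {..<N}"
      show "(\<Sum>xs\<in>P. real (Lf (ds s))) \<le> (\<Sum>xs\<in>P. R' * real B)"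
        by (rule sum_mono) (rule Lf_le[OF ds_dem])
    qed
    also have "\<dots> = real N * real (card P) * (R' * real B)" by simp
    finally show ?thesis .
  qed
  have TOT_eq: "TOT = (\<Sum>xs\<in>P. \<Sum>u\<in>users. \<Sum>n<N. cnt n u xs)"
  proof -
    have "TOT = (\<Sum>xs\<in>P. \<Sum>s<N. \<Sum>u\<in>users. cnt (ds s u) u xs)" unfolding TOT_def by (rule sum.swap)
    also have "\<dots> = (\<Sum>xs\<in>P. \<Sum>u\<in>users. \<Sum>s<N. cnt (ds s u) u xs)"
      by (rule sum.cong[OF refl], rule sum.swap)
    also have "\<dots> = (\<Sum>xs\<in>P. \<Sum>u\<in>users. \<Sum>n<N. cnt n u xs)"
    proof (rule sum.cong[OF refl], rule sum.cong[OF refl])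
      fix xs u assume u: "u \<in> users"
      have "(\<Sum>s<N. cnt (ds s u) u xs) = (\<Sum>s<N. cnt ((e u + s) mod N) u xs)"
        unfolding ds_def using u by simp
      also have "\<dots> = (\<Sum>n<N. cnt n u xs)" using eimg u by (intro shift_sum) auto
      finally show "(\<Sum>s<N. cnt (ds s u) u xs) = (\<Sum>n<N. cnt n u xs)" .
    qed
    finally show ?thesis .
  qed
  define G where "G s = (\<Sum>l\<le>Lam. real (Kv l) * hh Lam l s)" for s
  have plsub: "pl n i \<subseteq> {..<Lam}" if "n < N" "i < B" for n i
    using unc that unfolding uncoded_placement_def by blast
  have inner: "real (\<Sum>xs\<in>P. \<Sum>u\<in>users. cnt n u xs) = (\<Sum>i<B. fact Lam * G (card (pl n i)))" if n: "n < N" for n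
  proof -
    have "(\<Sum>xs\<in>P. \<Sum>u\<in>users. cnt n u xs)
        = (\<Sum>xs\<in>P. \<Sum>u\<in>users. \<Sum>i<B. if pl n i \<inter> Vp xs (fst u) = {} then 1 else 0)"
      unfolding cnt_def by (simp add: card_filter_sum)
    also have "\<dots> = (\<Sum>xs\<in>P. \<Sum>i<B. \<Sum>u\<in>users. if pl n i \<inter> Vp xs (fst u) = {} then 1 else 0)"
      by (rule sum.cong[OF refl], rule sum.swap)
    also have "\<dots> = (\<Sum>xs\<in>P. \<Sum>i<B. \<Sum>k\<le>Lam. Kv k * (mpre (pl n i) xs choose k))"
    proof (rule sum.cong[OF refl])
      fix xs assume xs: "xs \<in> P"
      show "(\<Sum>i<B. \<Sum>u\<in>users. if pl n i \<inter> Vp xs (fst u) = {} then 1 else 0) = (\<Sum>i<B. \<Sum>k\<le>Lam. Kv k * (mpre (pl n i) xs choose k))"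
        unfolding users_def using count_users[of xs Lam] xs unfolding P_def by simp
    qed
    also have "\<dots> = (\<Sum>i<B. \<Sum>k\<le>Lam. Kv k * (\<Sum>xs\<in>P. mpre (pl n i) xs choose k))"
      by (simp add: sum.swap[of _ P] sum_distrib_left)
    finally have e1: "real (\<Sum>xs\<in>P. \<Sum>u\<in>users. cnt n u xs)
        = (\<Sum>i<B. \<Sum>k\<le>Lam. real (Kv k) * real (\<Sum>xs\<in>P. mpre (pl n i) xs choose k))"
      by simp
    also have "\<dots> = (\<Sum>i<B. \<Sum>k\<le>Lam. real (Kv k) * (fact Lam * hh Lam k (card (pl n i))))"
      unfolding P_def using plsub[OF n] phi_real by simp
    also have "\<dots> = (\<Sum>i<B. fact Lam * G (card (pl n i)))"
      unfolding G_def by (simp add: sum_distrib_left mult_ac)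
    finally show ?thesis .
  qed
  have TOT_n: "TOT = (\<Sum>n<N. \<Sum>xs\<in>P. \<Sum>u\<in>users. cnt n u xs)"
  proof -
    have "TOT = (\<Sum>xs\<in>P. \<Sum>n<N. \<Sum>u\<in>users. cnt n u xs)"
      unfolding TOT_eq by (rule sum.cong[OF refl], rule sum.swap)
    also have "\<dots> = (\<Sum>n<N. \<Sum>xs\<in>P. \<Sum>u\<in>users. cnt n u xs)" by (rule sum.swap)
    finally show ?thesis .
  qed
  have TOT_real: "real TOT = fact Lam * (\<Sum>n<N. \<Sum>i<B. G (card (pl n i)))"
  proof -
    have "real TOT = (\<Sum>n<N. real (\<Sum>xs\<in>P. \<Sum>u\<in>users. cnt n u xs))"
      unfolding TOT_n by (rule of_nat_sum)
    also have "\<dots> = (\<Sum>n<N. \<Sum>i<B. fact Lam * G (card (pl n i)))"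
      by (rule sum.cong[OF refl]) (rule inner, simp)
    also have "\<dots> = fact Lam * (\<Sum>n<N. \<Sum>i<B. G (card (pl n i)))"
      by (simp add: sum_distrib_left)
    finally show ?thesis .
  qed
  obtain \<alpha> where a0: "\<alpha> \<le> 0" and sup: "\<forall>s\<le>Lam. G s \<ge> G t + \<alpha> * (real s - real t)"
    using G_support[OF tL, of Kv] unfolding G_def by blast
  have "(\<Sum>n<N. \<Sum>i<B. G (card (pl n i))) \<ge> (\<Sum>n<N. \<Sum>i<B. G t + \<alpha> * (real (card (pl n i)) - real t))"
  proof (rule sum_mono, rule sum_mono)
    fix n i assume "n \<in> {..<N}" "i \<in> {..<B}"
    hence "card (pl n i) \<le> Lam" using plsub card_mono[OF finite_lessThan] by fastforce
    thus "G t + \<alpha> * (real (card (pl n i)) - real t) \<le> G (card (pl n i))" using sup by blast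
  qed
  also have "(\<Sum>n<N. \<Sum>i<B. G t + \<alpha> * (real (card (pl n i)) - real t))
      = real N * real B * G t + \<alpha> * (real (\<Sum>n<N. \<Sum>i<B. card (pl n i)) - real t * real N * real B)"
    by (simp add: sum.distrib sum_distrib_left sum_subtractf algebra_simps)
  finally have g1: "real N * real B * G t + \<alpha> * (real (\<Sum>n<N. \<Sum>i<B. card (pl n i)) - real t * real N * real B)
      \<le> (\<Sum>n<N. \<Sum>i<B. G (card (pl n i)))" .
  have "\<alpha> * (real (\<Sum>n<N. \<Sum>i<B. card (pl n i)) - real t * real N * real B) \<ge> 0"
    using a0 total_size[OF unc csz] by (intro mult_nonpos_nonpos) auto
  hence g2: "real N * real B * G t \<le> (\<Sum>n<N. \<Sum>i<B. G (card (pl n i)))" using g1 by linarith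
  have cP: "real (card P) = fact Lam" unfolding P_def by simp
  have "fact Lam * (real N * real B * G t) \<le> fact Lam * (\<Sum>n<N. \<Sum>i<B. G (card (pl n i)))"
    using g2 by (intro mult_left_mono) auto
  also have "\<dots> = real TOT" using TOT_real by simp
  also have "\<dots> \<le> real N * fact Lam * (R' * real B)" using TOT_le cP by simp
  finally have fin1: "(fact Lam * real N * real B) * G t \<le> (fact Lam * real N * real B) * R'"
    by (simp add: mult_ac)
  have pos1: "fact Lam * real N * real B > 0" using Npos Bp by simp
  have "G t \<le> R'" using mult_le_cancel_left_pos[OF pos1, of "G t" R'] fin1 by simp
  thus ?thesis unfolding G_def .
qed


lemma parity_lemma:
  assumes fin: "finite A" and x: "x \<in> A" and oth: "\<forall>y\<in>A - {x}. P y = Q y"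
    and par: "odd (card {y\<in>A. P y}) = odd (card {y\<in>A. Q y})"
  shows "P x = Q x"
proof -
  have eqo: "{y\<in>A - {x}. P y} = {y\<in>A - {x}. Q y}" using oth by auto
  have cP: "card {y\<in>A. P y} = card {y\<in>A - {x}. P y} + (if P x then 1 else 0)"
  proof (cases "P x")
    case True
    hence "{y\<in>A. P y} = insert x {y\<in>A - {x}. P y}" using x by auto
    thus ?thesis using True fin by simp
  next
    case False
    hence "{y\<in>A. P y} = {y\<in>A - {x}. P y}" by auto
    thus ?thesis using False by simp
  qed
  have cQ: "card {y\<in>A. Q y} = card {y\<in>A - {x}. Q y} + (if Q x then 1 else 0)"
  proof (cases "Q x")
    case True
    hence "{y\<in>A. Q y} = insert x {y\<in>A - {x}. Q y}" using x by auto
    thus ?thesis using True fin by simp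
  next
    case False
    hence "{y\<in>A. Q y} = {y\<in>A - {x}. Q y}" by auto
    thus ?thesis using False by simp
  qed
  show ?thesis using par unfolding cP cQ eqo by (cases "P x"; cases "Q x") auto
qed

lemma determ_dec:
  fixes enc :: "'w \<Rightarrow> 'c" and kn :: "'w \<Rightarrow> 'k" and val :: "'w \<Rightarrow> 'v"
  assumes "\<And>W W'. enc W = enc W' \<Longrightarrow> kn W = kn W' \<Longrightarrow> val W = val W'"
  shows "\<exists>dec. \<forall>W. dec (enc W) (kn W) = val W"
proof -
  define dec where "dec c k = val (SOME W. enc W = c \<and> kn W = k)" for c k
  have "dec (enc W) (kn W) = val W" for W
  proof -
    have "enc (SOME W'. enc W' = enc W \<and> kn W' = kn W) = enc W \<and> kn (SOME W'. enc W' = enc W \<and> kn W' = kn W) = kn W"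
      by (rule someI[of _ W]) simp
    thus ?thesis unfolding dec_def using assms by blast
  qed
  thus ?thesis by blast
qed

locale MANsetup =
  fixes Lam N B t :: nat and pl :: "nat \<Rightarrow> nat \<Rightarrow> nat set" and Kv :: "nat \<Rightarrow> nat"
  assumes tL: "t \<le> Lam" and Bp: "B > 0" and man: "MAN_placement Lam N B t pl"
begin

definition F where "F = B div (Lam choose t)"
definition sub where "sub n T = {i. i < B \<and> pl n i = T}"
definition idx where "idx n T p = sorted_list_of_set (sub n T) ! p"

lemma Cpos: "Lam choose t > 0" using tL by simp

lemma BF: "B = F * (Lam choose t)"
  using man unfolding MAN_placement_def F_def by simp

lemma Fpos: "F > 0" using BF Bp by (cases F) auto

lemma pl_props: "n < N \<Longrightarrow> i < B \<Longrightarrow> pl n i \<subseteq> {..<Lam} \<and> card (pl n i) = t"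
  using man unfolding MAN_placement_def by blast

lemma card_sub: "n < N \<Longrightarrow> T \<subseteq> {..<Lam} \<Longrightarrow> card T = t \<Longrightarrow> card (sub n T) = F"
  using man unfolding MAN_placement_def sub_def F_def by blast

lemma fin_sub: "finite (sub n T)" unfolding sub_def by simp

lemma idx_in:
  assumes "n < N" "T \<subseteq> {..<Lam}" "card T = t" "p < F"
  shows "idx n T p \<in> sub n T"
proof -
  have "length (sorted_list_of_set (sub n T)) = F" using card_sub[OF assms(1-3)] by simp
  hence "sorted_list_of_set (sub n T) ! p \<in> set (sorted_list_of_set (sub n T))" using assms(4) by (intro nth_mem) simp
  thus ?thesis unfolding idx_def using fin_sub by simp
qed

lemma idx_surj:
  assumes "n < N" "i < B"
  shows "\<exists>p<F. idx n (pl n i) p = i"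
proof -
  have T: "pl n i \<subseteq> {..<Lam}" "card (pl n i) = t" using pl_props[OF assms] by auto
  have "i \<in> set (sorted_list_of_set (sub n (pl n i)))" using assms fin_sub unfolding sub_def by simp
  then obtain p where "p < length (sorted_list_of_set (sub n (pl n i)))" "sorted_list_of_set (sub n (pl n i)) ! p = i"
    by (auto simp: in_set_conv_nth)
  moreover have "length (sorted_list_of_set (sub n (pl n i))) = F" using card_sub[OF assms(1) T] by simp
  ultimately show ?thesis unfolding idx_def by auto
qed

definition I where "I = {(S, j, p). S \<subseteq> {..<Lam} \<and> t \<le> card S \<and> j < Kv (card S - t) \<and> p < F}"

lemma I_Sigma: "I = Sigma {S \<in> Pow {..<Lam}. t \<le> card S} (\<lambda>S. {..<Kv (card S - t)} \<times> {..<F})"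
  unfolding I_def by auto

lemma finI: "finite I" unfolding I_Sigma by (auto intro!: finite_SigmaI)

definition xsI where "xsI = (SOME xs. distinct xs \<and> set xs = I)"

lemma xsI: "distinct xsI" "set xsI = I"
proof -
  have "\<exists>xs. distinct xs \<and> set xs = I" using finite_distinct_list[OF finI] by blast
  hence "distinct xsI \<and> set xsI = I" unfolding xsI_def by (rule someI_ex)
  thus "distinct xsI" "set xsI = I" by auto
qed

definition val where
  "val d W x = (case x of (S, j, p) \<Rightarrow>
     odd (card {U. U \<subseteq> S \<and> card U = card S - t \<and> W (d (U, j)) (idx (d (U, j)) (S - U) p)}))"

definition enc where "enc d W = map (val d W) xsI"

lemma len_enc: "length (enc d W) = card I"
  unfolding enc_def using xsI distinct_card by fastforce

lemma determ:
  assumes d: "d \<in> demands (comb_users Lam Kv) N" and u: "u \<in> comb_users Lam Kv"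
    and ee: "enc d W = enc d W'"
    and kk: "known_bits N B pl (comb_conn u) W = known_bits N B pl (comb_conn u) W'"
    and iB: "i < B"
  shows "W (d u) i = W' (d u) i"
proof -
  obtain U j where uUj: "u = (U, j)" by (cases u)
  have U: "U \<subseteq> {..<Lam}" "j < Kv (card U)" using u uUj unfolding comb_users_def by auto
  have dN: "\<And>w. w \<in> comb_users Lam Kv \<Longrightarrow> d w < N" using d unfolding demands_def by auto
  define n where "n = d u"
  have nN: "n < N" unfolding n_def using dN[OF u] .
  define T where "T = pl n i"
  have T: "T \<subseteq> {..<Lam}" "card T = t" using pl_props[OF nN iB] unfolding T_def by auto
  have kn: "\<And>n' i'. n' < N \<Longrightarrow> i' < B \<Longrightarrow> pl n' i' \<inter> U \<noteq> {} \<Longrightarrow> W n' i' = W' n' i'"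
  proof -
    fix n' i' assume "n' < N" "i' < B" "pl n' i' \<inter> U \<noteq> {}"
    thus "W n' i' = W' n' i'" using fun_cong[OF fun_cong[OF kk, of n'], of i'] uUj
      unfolding known_bits_def comb_conn_def by simp
  qed
  show ?thesis
  proof (cases "T \<inter> U = {}")
    case False
    thus ?thesis using kn[OF nN iB] unfolding T_def n_def by simp
  next
    case True
    obtain p where p: "p < F" "idx n T p = i" using idx_surj[OF nN iB] unfolding T_def by blast
    define S where "S = T \<union> U"
    have finS: "finite S" unfolding S_def using T U finite_subset by blast
    have SL: "S \<subseteq> {..<Lam}" unfolding S_def using T U by auto
    have cS: "card S = t + card U" unfolding S_def using True T U
      by (simp add: card_Un_disjoint finite_subset)
    have SI: "(S, j, p) \<in> I" unfolding I_def using SL cS U p by simp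
    have vv: "val d W (S, j, p) = val d W' (S, j, p)"
    proof -
      have "map (val d W) xsI = map (val d W') xsI" using ee unfolding enc_def .
      thus ?thesis using SI xsI(2) by (simp add: map_eq_conv)
    qed
    define A where "A = {U'. U' \<subseteq> S \<and> card U' = card S - t}"
    have finA: "finite A" unfolding A_def using finS by auto
    have UA: "U \<in> A" unfolding A_def S_def using cS S_def by auto
    define Pw where "Pw U' = W (d (U', j)) (idx (d (U', j)) (S - U') p)" for U'
    define Qw where "Qw U' = W' (d (U', j)) (idx (d (U', j)) (S - U') p)" for U'
    have par: "odd (card {y\<in>A. Pw y}) = odd (card {y\<in>A. Qw y})"
    proof -
      have "{y\<in>A. Pw y} = {U'. U' \<subseteq> S \<and> card U' = card S - t \<and> W (d (U', j)) (idx (d (U', j)) (S - U') p)}"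
        unfolding A_def Pw_def by auto
      moreover have "{y\<in>A. Qw y} = {U'. U' \<subseteq> S \<and> card U' = card S - t \<and> W' (d (U', j)) (idx (d (U', j)) (S - U') p)}"
        unfolding A_def Qw_def by auto
      ultimately show ?thesis using vv unfolding val_def by simp
    qed
    have oth: "\<forall>y\<in>A - {U}. Pw y = Qw y"
    proof
      fix U' assume U': "U' \<in> A - {U}"
      have U'S: "U' \<subseteq> S" and cU': "card U' = card U" using U' cS unfolding A_def by auto
      have U'L: "U' \<subseteq> {..<Lam}" using U'S SL by auto
      have user: "(U', j) \<in> comb_users Lam Kv" unfolding comb_users_def using U'L cU' U by simp
      define n' where "n' = d (U', j)"
      have n'N: "n' < N" unfolding n'_def using dN[OF user] .
      have SU'L: "S - U' \<subseteq> {..<Lam}" using SL by auto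
      have cSU': "card (S - U') = t" using U'S finS cS cU' by (simp add: card_Diff_subset finite_subset)
      have isub: "idx n' (S - U') p \<in> sub n' (S - U')" by (rule idx_in[OF n'N SU'L cSU' p(1)])
      hence i'B: "idx n' (S - U') p < B" and pli': "pl n' (idx n' (S - U') p) = S - U'"
        unfolding sub_def by auto
      have "(S - U') \<inter> U \<noteq> {}"
      proof
        assume "(S - U') \<inter> U = {}"
        hence "U \<subseteq> U'" unfolding S_def by auto
        moreover have "finite U'" using U'S finS finite_subset by blast
        ultimately have "U = U'" using cU' card_subset_eq by metis
        thus False using U' by simp
      qed
      hence "W n' (idx n' (S - U') p) = W' n' (idx n' (S - U') p)"
        using kn[OF n'N i'B] pli' by simp
      thus "Pw U' = Qw U'" unfolding Pw_def Qw_def n'_def .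
    qed
    have "Pw U = Qw U" by (rule parity_lemma[OF finA UA oth par])
    moreover have "S - U = T" unfolding S_def using True by auto
    ultimately show ?thesis unfolding Pw_def Qw_def using p(2) uUj n_def by simp
  qed
qed

lemma delivers_all:
  assumes d: "d \<in> demands (comb_users Lam Kv) N"
  shows "delivers (comb_users Lam Kv) comb_conn N B pl d (card I)"
  unfolding delivers_def
proof (intro exI[of _ "enc d"] conjI ballI allI)
  show "\<And>W. length (enc d W) = card I" by (rule len_enc)
  fix u assume u: "u \<in> comb_users Lam Kv"
  have "\<exists>dec. \<forall>W. dec (enc d W) (known_bits N B pl (comb_conn u) W) = (\<lambda>i. if i < B then W (d u) i else False)"
    by (rule determ_dec) (use determ[OF d u] in auto)
  then obtain dec where dec: "\<forall>W. dec (enc d W) (known_bits N B pl (comb_conn u) W) = (\<lambda>i. if i < B then W (d u) i else False)"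
    by blast
  show "\<exists>dec. \<forall>W. \<forall>i<B. dec (enc d W) (known_bits N B pl (comb_conn u) W) i = W (d u) i"
    by (rule exI[of _ dec]) (use dec in simp)
qed

end


lemma finite_comb_users': "finite (comb_users Lam Kv)"
  unfolding comb_users_Sigma by auto

context MANsetup
begin

lemma card_I: "card I = F * (\<Sum>l = 0..Lam - t. Kv l * (Lam choose (t + l)))"
proof -
  have "card I = (\<Sum>S\<in>{S \<in> Pow {..<Lam}. t \<le> card S}. Kv (card S - t) * F)"
    unfolding I_Sigma by (subst card_SigmaI) (auto simp: card_cartesian_product)
  also have "\<dots> = (\<Sum>S\<in>Pow {..<Lam}. if t \<le> card S then Kv (card S - t) * F else 0)"
    by (rule sum.inter_filter) simp
  also have "\<dots> = (\<Sum>k\<le>Lam. (Lam choose k) * (if t \<le> k then Kv (k - t) * F else 0))"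
    using sum_Pow_card[of "{..<Lam}" "\<lambda>k. if t \<le> k then Kv (k - t) * F else 0"] by simp
  also have "\<dots> = (\<Sum>k\<in>{t..Lam}. (Lam choose k) * (Kv (k - t) * F))"
  proof -
    have "(\<Sum>k\<le>Lam. (Lam choose k) * (if t \<le> k then Kv (k - t) * F else 0))
        = (\<Sum>k\<le>Lam. if t \<le> k then (Lam choose k) * (Kv (k - t) * F) else 0)"
      by (rule sum.cong[OF refl]) simp
    also have "\<dots> = (\<Sum>k\<in>{k\<in>{..Lam}. t \<le> k}. (Lam choose k) * (Kv (k - t) * F))"
      by (rule sum.inter_filter[symmetric]) simp
    also have "{k\<in>{..Lam}. t \<le> k} = {t..Lam}" by auto
    finally show ?thesis .
  qed
  also have "\<dots> = (\<Sum>l\<in>{0..Lam - t}. (Lam choose (l + t)) * (Kv l * F))"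
  proof -
    have "{t..Lam} = {0 + t..(Lam - t) + t}" using tL by simp
    hence "(\<Sum>k\<in>{t..Lam}. (Lam choose k) * (Kv (k - t) * F)) = (\<Sum>k\<in>{0 + t..(Lam - t) + t}. (Lam choose k) * (Kv (k - t) * F))"
      by simp
    also have "\<dots> = (\<Sum>l\<in>{0..Lam - t}. (Lam choose (l + t)) * (Kv (l + t - t) * F))"
      by (rule sum.shift_bounds_cl_nat_ivl)
    finally show ?thesis by simp
  qed
  also have "\<dots> = F * (\<Sum>l = 0..Lam - t. Kv l * (Lam choose (t + l)))"
    by (simp add: sum_distrib_left mult_ac add.commute)
  finally show ?thesis .
qed

lemma achieves:
  assumes Ncard: "card (comb_users Lam Kv) \<le> N"
  shows "achieves_load (comb_users Lam Kv) comb_conn N B pl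
     ((\<Sum>l = 0..Lam - t. real (Kv l) * real (Lam choose (t + l))) / real (Lam choose t))"
  unfolding achieves_load_def
proof (intro exI[of _ "\<lambda>d. card I"] conjI ballI)
  fix d assume "d \<in> demands (comb_users Lam Kv) N"
  thus "delivers (comb_users Lam Kv) comb_conn N B pl d (card I)" by (rule delivers_all)
next
  have ne: "demands (comb_users Lam Kv) N \<noteq> {}"
  proof (cases "comb_users Lam Kv = {}")
    case True thus ?thesis unfolding demands_def by simp
  next
    case False
    hence "card (comb_users Lam Kv) > 0" using finite_comb_users' by (simp add: card_gt_0_iff)
    hence "N > 0" using Ncard by simp
    thus ?thesis unfolding demands_def PiE_eq_empty_iff by auto
  qed
  have img: "(\<lambda>d. real (card I) / real B) ` demands (comb_users Lam Kv) N = {real (card I) / real B}"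
    using ne by auto
  have "real (card I) / real B = real F * real (\<Sum>l = 0..Lam - t. Kv l * (Lam choose (t + l))) / (real F * real (Lam choose t))"
    unfolding card_I by (subst BF) simp
  also have "\<dots> = (\<Sum>l = 0..Lam - t. real (Kv l) * real (Lam choose (t + l))) / real (Lam choose t)"
    using Fpos by simp
  finally show "Max ((\<lambda>d. real (card I) / real B) ` demands (comb_users Lam Kv) N)
      = (\<Sum>l = 0..Lam - t. real (Kv l) * real (Lam choose (t + l))) / real (Lam choose t)"
    unfolding img by simp
qed

lemma uncoded: "uncoded_placement Lam N B pl"
  unfolding uncoded_placement_def using pl_props by blast

definition TT where "TT l = {T. T \<subseteq> {..<Lam} \<and> card T = t \<and> l \<in> T}"

lemma card_TT:
  assumes l: "l < Lam"
  shows "Lam * card (TT l) = t * (Lam choose t)"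
proof (cases "t = 0")
  case True
  have "T \<notin> TT l" for T
  proof
    assume T: "T \<in> TT l"
    hence "finite T" unfolding TT_def using finite_subset[of T "{..<Lam}"] by simp
    thus False using T True unfolding TT_def by auto
  qed
  hence "TT l = {}" by blast
  thus ?thesis using True by simp
next
  case False
  have "TT l = insert l ` {T'. T' \<subseteq> {..<Lam} - {l} \<and> card T' = t - 1}"
  proof
    show "TT l \<subseteq> insert l ` {T'. T' \<subseteq> {..<Lam} - {l} \<and> card T' = t - 1}"
    proof
      fix T assume T: "T \<in> TT l"
      hence "T = insert l (T - {l})" unfolding TT_def by auto
      moreover have "T - {l} \<subseteq> {..<Lam} - {l}" "card (T - {l}) = t - 1"
        using T unfolding TT_def by (auto simp: finite_subset)
      ultimately show "T \<in> insert l ` {T'. T' \<subseteq> {..<Lam} - {l} \<and> card T' = t - 1}" by blast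
    qed
    show "insert l ` {T'. T' \<subseteq> {..<Lam} - {l} \<and> card T' = t - 1} \<subseteq> TT l"
    proof
      fix T assume "T \<in> insert l ` {T'. T' \<subseteq> {..<Lam} - {l} \<and> card T' = t - 1}"
      then obtain T' where T': "T = insert l T'" "T' \<subseteq> {..<Lam} - {l}" "card T' = t - 1" by blast
      have "finite T'" using T'(2) finite_subset by blast
      moreover have "l \<notin> T'" using T'(2) by auto
      ultimately have "card T = t" using T'(1,3) False by simp
      thus "T \<in> TT l" unfolding TT_def using T' l by auto
    qed
  qed
  moreover have "inj_on (insert l) {T'. T' \<subseteq> {..<Lam} - {l} \<and> card T' = t - 1}"
    unfolding inj_on_def by blast
  ultimately have "card (TT l) = card {T'. T' \<subseteq> {..<Lam} - {l} \<and> card T' = t - 1}"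
    by (simp add: card_image)
  also have "\<dots> = (Lam - 1) choose (t - 1)"
    using n_subsets[of "{..<Lam} - {l}" "t - 1"] l by simp
  finally have "card (TT l) = (Lam - 1) choose (t - 1)" .
  thus ?thesis using times_binomial_minus1_eq[of t Lam] False by simp
qed

lemma cache_card:
  assumes l: "l < Lam"
  shows "card (cache_content N B pl l) = N * (card (TT l) * F)"
proof -
  have each: "card {i. i < B \<and> l \<in> pl n i} = card (TT l) * F" if n: "n < N" for n
  proof -
    have "{i. i < B \<and> l \<in> pl n i} = (\<Union>T\<in>TT l. sub n T)"
      unfolding sub_def TT_def using pl_props[OF n] by auto
    moreover have "card (\<Union>T\<in>TT l. sub n T) = (\<Sum>T\<in>TT l. card (sub n T))"
    proof (rule card_UN_disjoint)
      show "finite (TT l)" unfolding TT_def by (rule finite_subset[of _ "Pow {..<Lam}"]) auto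
      show "\<forall>T\<in>TT l. finite (sub n T)" using fin_sub by blast
      show "\<forall>T\<in>TT l. \<forall>T'\<in>TT l. T \<noteq> T' \<longrightarrow> sub n T \<inter> sub n T' = {}" unfolding sub_def by auto
    qed
    ultimately have "card {i. i < B \<and> l \<in> pl n i} = (\<Sum>T\<in>TT l. card (sub n T))" by simp
    also have "\<dots> = (\<Sum>T\<in>TT l. F)" using card_sub[OF n] unfolding TT_def by (intro sum.cong) auto
    finally show ?thesis by simp
  qed
  have "cache_content N B pl l = (\<Union>n<N. (\<lambda>i. (n, i)) ` {i. i < B \<and> l \<in> pl n i})"
    unfolding cache_content_def by auto
  moreover have "card (\<Union>n<N. (\<lambda>i. (n, i)) ` {i. i < B \<and> l \<in> pl n i}) = (\<Sum>n<N. card ((\<lambda>i. (n, i)) ` {i. i < B \<and> l \<in> pl n i}))"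
    by (rule card_UN_disjoint) auto
  ultimately have "card (cache_content N B pl l) = (\<Sum>n<N. card ((\<lambda>i. (n, i)) ` {i. i < B \<and> l \<in> pl n i}))"
    by simp
  also have "\<dots> = (\<Sum>n<N. card {i. i < B \<and> l \<in> pl n i})" by (simp add: card_image inj_on_def)
  also have "\<dots> = (\<Sum>n<N. card (TT l) * F)" using each by simp
  finally show ?thesis by simp
qed

lemma cache_ok: "respects_cache_size Lam N B (real t * real N / real Lam) pl"
  unfolding respects_cache_size_def
proof (intro allI impI)
  fix l assume l: "l < Lam"
  have "Lam * card (cache_content N B pl l) = N * F * (Lam * card (TT l))"
    unfolding cache_card[OF l] by (simp add: mult_ac)
  also have "\<dots> = N * F * (t * (Lam choose t))" unfolding card_TT[OF l] ..
  also have "\<dots> = t * N * (F * (Lam choose t))" by (simp add: mult_ac)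
  also have "\<dots> = t * N * B" using BF by (rule arg_cong[where f="\<lambda>z. t * N * z", OF sym])
  finally have ne: "Lam * card (cache_content N B pl l) = t * N * B" .
  have "real (Lam * card (cache_content N B pl l)) = real (t * N * B)" unfolding ne ..
  hence "real Lam * real (card (cache_content N B pl l)) = real t * real N * real B" by simp
  moreover have "real Lam > 0" using l by simp
  ultimately show "real (card (cache_content N B pl l)) \<le> real t * real N / real Lam * real B"
    by (simp add: field_simps)
qed

end


lemma card_comb_users: "card (comb_users Lam Kv) = (\<Sum>l\<le>Lam. Kv l * (Lam choose l))"
proof -
  have "card (comb_users Lam Kv) = (\<Sum>U\<in>Pow {..<Lam}. card {..<Kv (card U)})"
    unfolding comb_users_Sigma by (rule card_SigmaI) auto
  also have "\<dots> = (\<Sum>U\<in>Pow {..<Lam}. Kv (card U))" by simp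
  also have "\<dots> = (\<Sum>k\<le>Lam. (Lam choose k) * Kv k)"
    using sum_Pow_card[of "{..<Lam}" Kv] by simp
  finally show ?thesis by (simp add: mult.commute)
qed

lemma exists_MAN:
  assumes "t \<le> Lam"
  shows "\<exists>pl. MAN_placement Lam N (Lam choose t) t pl"
proof -
  define TS where "TS = {T. T \<subseteq> {..<Lam} \<and> card T = t}"
  have cTS: "card TS = Lam choose t" unfolding TS_def using n_subsets[of "{..<Lam}" t] by simp
  have fTS: "finite TS" unfolding TS_def by (rule finite_subset[of _ "Pow {..<Lam}"]) auto
  obtain g where g: "bij_betw g {..<Lam choose t} TS"
    using finite_same_card_bij[of "{..<Lam choose t}" TS] fTS cTS by auto
  have Cpos: "Lam choose t > 0" using assms by simp
  define pl where "pl n i = g i" for n i :: nat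
  have "MAN_placement Lam N (Lam choose t) t pl"
    unfolding MAN_placement_def
  proof (intro conjI allI impI)
    show "(Lam choose t) dvd (Lam choose t)" by simp
    fix n i assume "n < N" "i < Lam choose t"
    hence "g i \<in> TS" using g by (auto simp: bij_betw_def)
    thus "pl n i \<subseteq> {..<Lam}" "card (pl n i) = t" unfolding pl_def TS_def by auto
  next
    fix n T assume "n < N" and T: "T \<subseteq> {..<Lam} \<and> card T = t"
    hence "T \<in> TS" unfolding TS_def by simp
    then obtain i where i: "i < Lam choose t" "g i = T" using g by (auto simp: bij_betw_def)
    have "{i'. i' < Lam choose t \<and> pl n i' = T} = {i}"
    proof
      show "{i'. i' < Lam choose t \<and> pl n i' = T} \<subseteq> {i}"
        using i g unfolding pl_def bij_betw_def inj_on_def by auto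
      show "{i} \<subseteq> {i'. i' < Lam choose t \<and> pl n i' = T}" using i unfolding pl_def by auto
    qed
    thus "card {i'. i' < Lam choose t \<and> pl n i' = T} = (Lam choose t) div (Lam choose t)"
      using Cpos by simp
  qed
  thus ?thesis by blast
qed

lemma Rval_eq:
  assumes "t \<le> Lam"
  shows "(\<Sum>l = 0..Lam - t. real (Kv l) * real (Lam choose (t + l))) / real (Lam choose t)
       = (\<Sum>l\<le>Lam. real (Kv l) * hh Lam l t)"
proof -
  have "(\<Sum>l = 0..Lam - t. real (Kv l) * real (Lam choose (t + l))) = (\<Sum>l\<le>Lam. real (Kv l) * real (Lam choose (t + l)))"
  proof (rule sum.mono_neutral_left)
    show "{0..Lam - t} \<subseteq> {..Lam}" by auto
    show "\<forall>i\<in>{..Lam} - {0..Lam - t}. real (Kv i) * real (Lam choose (t + i)) = 0" by auto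
  qed simp
  thus ?thesis unfolding hh_def by (simp add: sum_divide_distrib add.commute)
qed

theorem corollary1:
  fixes Lam N t :: nat and Kv :: "nat \<Rightarrow> nat"
  assumes "N \<ge> (\<Sum>l\<le>Lam. Kv l * (Lam choose l))"
    and "t \<le> Lam"
  shows "(\<forall>B pl. B > 0 \<and> MAN_placement Lam N B t pl \<longrightarrow>
            uncoded_placement Lam N B pl \<and>
            respects_cache_size Lam N B (real t * real N / real Lam) pl \<and>
            achieves_load (comb_users Lam Kv) comb_conn N B pl
              ((\<Sum>l = 0..Lam - t. real (Kv l) * real (Lam choose (t + l))) / real (Lam choose t)))
       \<and> opt_load Lam (comb_users Lam Kv) comb_conn N (real t * real N / real Lam)
           = (\<Sum>l = 0..Lam - t. real (Kv l) * real (Lam choose (t + l))) / real (Lam choose t)"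
proof -
  have Ncard: "card (comb_users Lam Kv) \<le> N" using assms(1) card_comb_users by simp
  have tL: "t \<le> Lam" by fact
  define Rv where "Rv = (\<Sum>l = 0..Lam - t. real (Kv l) * real (Lam choose (t + l))) / real (Lam choose t)"
  have part1: "\<forall>B pl. B > 0 \<and> MAN_placement Lam N B t pl \<longrightarrow>
            uncoded_placement Lam N B pl \<and>
            respects_cache_size Lam N B (real t * real N / real Lam) pl \<and>
            achieves_load (comb_users Lam Kv) comb_conn N B pl Rv"
  proof (intro allI impI)
    fix B pl assume h: "B > 0 \<and> MAN_placement Lam N B t pl"
    interpret M: MANsetup Lam N B t pl Kv using tL h by unfold_locales auto
    show "uncoded_placement Lam N B pl \<and>
            respects_cache_size Lam N B (real t * real N / real Lam) pl \<and>
            achieves_load (comb_users Lam Kv) comb_conn N B pl Rv"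
      unfolding Rv_def using M.uncoded M.cache_ok M.achieves[OF Ncard] by blast
  qed
  define SS where "SS = {R. \<exists>B pl. B > 0 \<and> uncoded_placement Lam N B pl \<and>
                   respects_cache_size Lam N B (real t * real N / real Lam) pl \<and>
                   achieves_load (comb_users Lam Kv) comb_conn N B pl R}"
  have inS: "Rv \<in> SS"
  proof -
    obtain pl where pl: "MAN_placement Lam N (Lam choose t) t pl" using exists_MAN[OF tL] by blast
    have "Lam choose t > 0" using tL by simp
    thus ?thesis unfolding SS_def using part1 pl by blast
  qed
  have lb: "Rv \<le> x" if x: "x \<in> SS" for x
  proof -
    obtain B pl where B: "B > 0" and unc: "uncoded_placement Lam N B pl"
      and csz: "respects_cache_size Lam N B (real t * real N / real Lam) pl"
      and ach: "achieves_load (comb_users Lam Kv) comb_conn N B pl x"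
      using x unfolding SS_def by blast
    show ?thesis
    proof (cases "comb_users Lam Kv = {}")
      case False
      have "(\<Sum>l\<le>Lam. real (Kv l) * hh Lam l t) \<le> x"
        by (rule converse[OF Ncard tL B unc csz ach False])
      thus ?thesis unfolding Rv_def Rval_eq[OF tL] .
    next
      case True
      have K0: "Kv l = 0" if "l \<le> Lam" for l
      proof (rule ccontr)
        assume "Kv l \<noteq> 0"
        hence "({..<l}, 0) \<in> comb_users Lam Kv" unfolding comb_users_def using that by auto
        thus False using True by simp
      qed
      have "Rv = 0" unfolding Rv_def using K0 by (simp add: sum.neutral)
      moreover have "x \<ge> 0"
      proof -
        obtain Lf where mx: "Max ((\<lambda>d. real (Lf d) / real B) ` demands (comb_users Lam Kv) N) = x"
          using ach unfolding achieves_load_def by blast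
        have dne: "demands (comb_users Lam Kv) N \<noteq> {}" unfolding demands_def True by simp
        have fd: "finite (demands (comb_users Lam Kv) N)" unfolding demands_def True by simp
        have "x \<in> (\<lambda>d. real (Lf d) / real B) ` demands (comb_users Lam Kv) N"
          unfolding mx[symmetric] using dne fd by (intro Max_in) auto
        thus ?thesis by auto
      qed
      ultimately show ?thesis by simp
    qed
  qed
  have "opt_load Lam (comb_users Lam Kv) comb_conn N (real t * real N / real Lam) = Rv"
    unfolding opt_load_def SS_def[symmetric] by (rule cInf_eq_minimum[OF inS lb])
  thus ?thesis using part1 unfolding Rv_def by blast
qed

end
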